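(* For all real $z$ with $0<|z|\le 1$, \[ \sum_{k=1}^\infty\frac{\zeta(2k)z^{2k}}{(k+1)(2k+1)} = \frac12-\frac{\zeta(3)}{2\pi^2z^2}+\frac{\operatorname{Cl}_3(2\pi z)}{2\pi^2z^2}+\frac{\operatorname{Cl}_2(2\pi z)}{2\pi z}. \]
   Context: $\zeta$ is the Riemann zeta function. $\operatorname{Cl}_2(x)=\sum_{k\ge1}\sin(kx)/k^2$ and $\operatorname{Cl}_3(x)=\sum_{k\ge1}\cos(kx)/k^3$ are Clausen functions. *)

theory Defs
  imports "HOL-Analysis.Analysis"
begin

text \<open>Riemann zeta function on the real half-line s > 1 via its Dirichlet series
  (only the values at s = 3 and s = 2k, k >= 1, are needed).\<close>
definition zeta :: "real \<Rightarrow> real" where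
  "zeta s = (\<Sum>n. 1 / (real (Suc n)) powr s)"

definition Cl2 :: "real \<Rightarrow> real" where
  "Cl2 x = (\<Sum>k. sin (real (Suc k) * x) / (real (Suc k))^2)"

definition Cl3 :: "real \<Rightarrow> real" where
  "Cl3 x = (\<Sum>k. cos (real (Suc k) * x) / (real (Suc k))^3)"

end

theory Submission
  imports Defs "HOL-Complex_Analysis.Complex_Analysis" "HOL-Real_Asymp.Real_Asymp"
begin

definition S0 :: "complex set" where "S0 = {w. Im w \<noteq> 0 \<or> Re w < 1}"

lemma open_S0: "open S0"
proof -
  have e: "S0 = {w. Im w < 0} \<union> {w. Im w > 0} \<union> {w. Re w < 1}" by (auto simp: S0_def)
  have "open ({w. Im w < 0} \<union> {w. Im w > 0} \<union> {w. Re w < 1})"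
    by (intro open_Un open_halfspace_Im_lt open_halfspace_Im_gt open_halfspace_Re_lt)
  thus ?thesis by (simp only: e)
qed

lemma starlike_S0: "starlike S0"
  unfolding starlike_def
proof (intro bexI[of _ 0] ballI subsetI)
  show "0 \<in> S0" by (simp add: S0_def)
  fix x y assume x: "x \<in> S0" and y: "y \<in> closed_segment 0 x"
  then obtain u where u: "0 \<le> u" "u \<le> 1" "y = u *\<^sub>R x" by (auto simp: closed_segment_def)
  show "y \<in> S0"
  proof (cases "u = 0")
    case True thus ?thesis using u by (simp add: S0_def)
  next
    case False
    with u have up: "u > 0" by simp
    show ?thesis
    proof (cases "Im x = 0")
      case True
      with x have "Re x < 1" by (simp add: S0_def)
      hence "u * Re x < 1"
        by (cases "Re x \<ge> 0") (auto intro: le_less_trans[OF mult_left_le_one_le] simp: mult_nonneg_nonpos2 u up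
             order_le_less_trans[OF mult_le_one] mult_le_cancel_right1
             | smt (verit) mult_left_le_one_le mult_nonneg_nonpos u(1) u(2))+
      thus ?thesis using u by (simp add: S0_def)
    next
      case False
      thus ?thesis using u up by (simp add: S0_def)
    qed
  qed
qed

lemma ball_S0: "ball 0 1 \<subseteq> S0"
proof
  fix w :: complex assume "w \<in> ball 0 1"
  hence "norm w < 1" by simp
  moreover have "Re w \<le> norm w" by (rule complex_Re_le_cmod)
  ultimately show "w \<in> S0" by (simp add: S0_def)
qed

lemma S0_Ln: "w \<in> S0 \<Longrightarrow> 1 - w \<notin> \<real>\<^sub>\<le>\<^sub>0"
  by (auto simp: S0_def complex_nonpos_Reals_iff)

lemma one_plus_of_nat_neq0 [simp]: "(1 + of_nat n :: complex) \<noteq> 0"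
  by (metis of_nat_Suc of_nat_eq_0_iff nat.distinct(1))

lemma div_le_self_real: "(0::real) \<le> a \<Longrightarrow> 1 \<le> b \<Longrightarrow> a / b \<le> a"
  by (simp add: divide_le_eq mult_le_cancel_left1)

lemma removable_cont:
  fixes f :: "complex \<Rightarrow> complex"
  assumes "(f has_field_derivative D) (at 0)" "f 0 = 0"
  shows "isCont (\<lambda>w. if w = 0 then D else f w / w) 0"
proof -
  have "((\<lambda>y. f y / y) \<longlongrightarrow> D) (at 0)" using assms by (simp add: has_field_derivative_iff)
  moreover have "\<forall>\<^sub>F y in at 0. f y / y = (if y = 0 then D else f y / y)"
    by (auto simp: eventually_at_filter)
  ultimately have "((\<lambda>y. if y=0 then D else f y / y) \<longlongrightarrow> D) (at 0)"
    by (rule Lim_transform_eventually)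
  thus ?thesis by (simp add: isCont_def)
qed

lemma primitive_exists:
  fixes f :: "complex \<Rightarrow> complex"
  assumes "(f has_field_derivative D) (at 0)" "f 0 = 0" "f holomorphic_on S0"
    and g_def: "\<And>w. g w = (if w = 0 then D else f w / w)"
  shows "\<exists>L. (\<forall>x\<in>S0. (L has_field_derivative g x) (at x)) \<and> L 0 = 0"
proof -
  have gg: "g = (\<lambda>w. if w = 0 then D else f w / w)" by (rule ext) (rule g_def)
  have hol: "g holomorphic_on (S0 - {0})"
  proof -
    have "(\<lambda>w. f w / w) holomorphic_on (S0 - {0})"
      by (intro holomorphic_intros holomorphic_on_subset[OF assms(3)]) auto
    thus ?thesis by (rule holomorphic_transform) (auto simp: gg)
  qed
  have op: "open (S0 - {0})" using open_S0 by auto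
  have cont: "continuous_on S0 g"
  proof (subst continuous_on_eq_continuous_at[OF open_S0], intro ballI)
    fix x assume x: "x \<in> S0"
    show "isCont g x"
    proof (cases "x = 0")
      case True thus ?thesis using removable_cont[OF assms(1,2)] by (simp add: gg)
    next
      case False
      hence "g field_differentiable at x"
        using holomorphic_on_imp_differentiable_at[OF hol op] x by auto
      thus ?thesis by (rule field_differentiable_imp_continuous_at)
    qed
  qed
  have "\<exists>L. \<forall>x \<in> S0. (L has_field_derivative g x) (at x)"
    by (rule holomorphic_starlike_primitive[OF cont starlike_S0 open_S0, of "{0}"])
       (use holomorphic_on_imp_differentiable_at[OF hol op] in auto)
  then obtain L where L: "\<forall>x \<in> S0. (L has_field_derivative g x) (at x)" by blast
  show ?thesis
    by (rule exI[of _ "\<lambda>x. L x - L 0"]) (use L in \<open>auto intro!: derivative_eq_intros\<close>)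
qed

definition g2 :: "complex \<Rightarrow> complex" where "g2 w = (if w = 0 then 1 else (- Ln (1 - w)) / w)"

lemma Ln1_deriv0: "((\<lambda>w. - Ln (1 - w)) has_field_derivative 1) (at 0)"
proof -
  have l: "(Ln has_field_derivative inverse (1 - 0)) (at (1 - 0))"
    by (rule has_field_derivative_Ln) (simp add: complex_nonpos_Reals_iff)
  have "((\<lambda>w. Ln (1 - w)) has_field_derivative inverse (1 - 0) * (-1)) (at 0)"
    by (rule DERIV_chain2[where f=Ln and g="\<lambda>w. 1 - w", OF l]) (auto intro!: derivative_eq_intros)
  hence "((\<lambda>w. Ln (1 - w)) has_field_derivative -1) (at 0)" by simp
  from DERIV_minus[OF this] show ?thesis by simp
qed

lemma hol_Ln1: "(\<lambda>w. - Ln (1 - w)) holomorphic_on S0"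
  by (intro holomorphic_intros) (auto dest: S0_Ln)

definition "Lp2 = (SOME L. (\<forall>x\<in>S0. (L has_field_derivative g2 x) (at x)) \<and> L 0 = 0)"

lemma Lp2: "(\<forall>x\<in>S0. (Lp2 has_field_derivative g2 x) (at x)) \<and> Lp2 0 = 0"
proof -
  have "\<exists>L. (\<forall>x\<in>S0. (L has_field_derivative g2 x) (at x)) \<and> L 0 = 0"
    by (rule primitive_exists[OF Ln1_deriv0 _ hol_Ln1 g2_def]) simp
  then show ?thesis unfolding Lp2_def by (rule someI_ex)
qed

lemma Lp2_deriv: "x \<in> S0 \<Longrightarrow> (Lp2 has_field_derivative g2 x) (at x)"
  using Lp2 by blast

lemma Lp2_0: "Lp2 0 = 0" using Lp2 by blast

definition g3 :: "complex \<Rightarrow> complex" where "g3 w = (if w = 0 then 1 else Lp2 w / w)"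

lemma hol_Lp2: "Lp2 holomorphic_on S0"
  using Lp2_deriv by (auto simp: holomorphic_on_open[OF open_S0])

definition "Lp3 = (SOME L. (\<forall>x\<in>S0. (L has_field_derivative g3 x) (at x)) \<and> L 0 = 0)"

lemma Lp3: "(\<forall>x\<in>S0. (Lp3 has_field_derivative g3 x) (at x)) \<and> Lp3 0 = 0"
proof -
  have d: "(Lp2 has_field_derivative 1) (at 0)"
    using Lp2_deriv[of 0] by (simp add: S0_def g2_def)
  have "\<exists>L. (\<forall>x\<in>S0. (L has_field_derivative g3 x) (at x)) \<and> L 0 = 0"
    by (rule primitive_exists[OF d Lp2_0 hol_Lp2 g3_def])
  then show ?thesis unfolding Lp3_def by (rule someI_ex)
qed

lemma Lp3_deriv: "x \<in> S0 \<Longrightarrow> (Lp3 has_field_derivative g3 x) (at x)"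
  using Lp3 by blast

lemma Lp3_0: "Lp3 0 = 0" using Lp3 by blast

definition Pm :: "nat \<Rightarrow> complex \<Rightarrow> complex" where
  "Pm m w = (\<Sum>n. w^Suc n / of_nat (Suc n)^m)"

lemma Pm_0 [simp]: "Pm m 0 = 0" by (simp add: Pm_def)

lemma summable_geo_like:
  fixes w :: complex
  assumes "norm w < 1"
  shows "summable (\<lambda>n. w^n / of_nat (Suc n)^m)"
proof (rule summable_comparison_test[of _ "\<lambda>n. norm w ^ n"])
  show "summable (\<lambda>n. norm w ^ n)" using assms by (simp add: summable_geometric)
  have "norm (w^n / of_nat (Suc n)^m) \<le> norm w ^ n" for n
  proof -
    have "norm (w^n / of_nat (Suc n)^m) = norm w ^ n / real (Suc n)^m"
      by (simp add: norm_divide norm_power del: of_nat_Suc)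
    also have "\<dots> \<le> norm w ^ n"
      by (rule div_le_self_real) (auto simp: one_le_power)
    finally show ?thesis .
  qed
  thus "\<exists>N. \<forall>n\<ge>N. norm (w^n / of_nat (Suc n)^m) \<le> norm w ^ n" by blast
qed

lemma Pm_deriv:
  fixes w :: complex
  assumes "norm w < 1"
  shows "(Pm (Suc m) has_field_derivative (\<Sum>n. w^n / of_nat (Suc n)^m)) (at w)"
proof -
  define r where "r = (1 + norm w)/2"
  have "0 \<le> norm w" by simp
  hence r: "norm w < r" "r < 1" "0 < r" using assms by (auto simp: r_def add_pos_nonneg)
  have der: "((\<lambda>w. w^Suc n / of_nat (Suc n)^Suc m) has_field_derivative x^n / of_nat (Suc n)^m) (at x within ball 0 r)"
    for n and x :: complex
  proof -
    have "((\<lambda>w. w^Suc n / of_nat (Suc n)^Suc m) has_field_derivative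
           (of_nat (Suc n) * x^n) / of_nat (Suc n)^Suc m) (at x within ball 0 r)"
    proof -
      have "((\<lambda>w::complex. w^Suc n) has_field_derivative of_nat (Suc n) * x^n) (at x within ball 0 r)"
        using DERIV_power[where n="Suc n", OF DERIV_ident, where x=x and s="ball 0 r"] by simp
      thus ?thesis by (rule DERIV_cdivide)
    qed
    also have "(of_nat (Suc n) * x^n) / of_nat (Suc n)^Suc m = x^n / (of_nat (Suc n)^m :: complex)"
    proof -
      have nz: "(of_nat (Suc n) :: complex) \<noteq> 0" by (metis of_nat_eq_0_iff nat.distinct(1))
      show ?thesis using nz by (simp add: power_Suc field_simps del: of_nat_Suc)
    qed
    finally show ?thesis .
  qed
  have unif: "uniformly_convergent_on (ball 0 r) (\<lambda>n (x::complex). \<Sum>i<n. x^i / of_nat (Suc i)^m)"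
  proof (rule Weierstrass_m_test'[of _ _ "\<lambda>n. r ^ n"])
    have "0 \<le> norm w" by simp
    hence "\<bar>r\<bar> < 1" using r by linarith
    thus "summable (\<lambda>n. r ^ n)" by (intro summable_geometric) auto
    fix n and x :: complex assume x: "x \<in> ball 0 r"
    have "norm (x^n / of_nat (Suc n)^m) = norm x ^ n / real (Suc n)^m"
      by (simp add: norm_divide norm_power del: of_nat_Suc)
    also have "\<dots> \<le> norm x ^ n"
      by (rule div_le_self_real) (auto simp: one_le_power)
    also have "\<dots> \<le> r ^ n" using x by (intro power_mono) auto
    finally show "norm (x^n / of_nat (Suc n)^m) \<le> r ^ n" .
  qed
  have "((\<lambda>x. \<Sum>n. x^Suc n / of_nat (Suc n)^Suc m) has_field_derivative (\<Sum>n. w^n / of_nat (Suc n)^m)) (at w)"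
    by (rule has_field_derivative_series'(2)[OF convex_ball der unif, of 0])
       (use r in \<open>auto simp: interior_open\<close>)
  thus ?thesis by (simp add: Pm_def[abs_def])
qed

lemma Pm_cont: "continuous_on (cball 0 1) (Pm (Suc (Suc m)))"
proof -
  have "uniform_limit (cball 0 1) (\<lambda>n (x::complex). \<Sum>i<n. x^Suc i / of_nat (Suc i)^Suc (Suc m))
          (\<lambda>x. suminf (\<lambda>i. x^Suc i / of_nat (Suc i)^Suc (Suc m))) sequentially"
  proof (rule Weierstrass_m_test[where M="\<lambda>n. inverse (real (Suc n)^2)"])
    show "summable (\<lambda>n. inverse (real (Suc n)^2))"
      using inverse_power_summable[of 2, where 'a=real] by (subst summable_Suc_iff) simp
    fix n and x :: complex assume x: "x \<in> cball 0 1"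
    have "norm (x^Suc n / of_nat (Suc n)^Suc (Suc m)) = norm x ^ Suc n / real (Suc n)^Suc (Suc m)"
      by (simp add: norm_divide norm_power del: of_nat_Suc power_Suc)
    also have "\<dots> \<le> 1 / real (Suc n)^Suc (Suc m)"
      using x by (intro divide_right_mono power_le_one) auto
    also have "\<dots> \<le> 1 / real (Suc n)^2"
      by (intro divide_left_mono power_increasing) (auto simp del: of_nat_Suc)
    finally show "norm (x^Suc n / of_nat (Suc n)^Suc (Suc m)) \<le> inverse (real (Suc n)^2)"
      by (simp add: field_simps)
  qed
  hence "continuous_on (cball 0 1) (\<lambda>x::complex. suminf (\<lambda>i. x^Suc i / of_nat (Suc i)^Suc (Suc m)))"
    by (rule uniform_limit_theorem[rotated]) (auto intro!: always_eventually continuous_intros)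
  thus ?thesis by (simp add: Pm_def[abs_def])
qed

lemma ball_eq:
  assumes "\<forall>x\<in>S0. (L has_field_derivative g x) (at x)" "L 0 = 0"
    "\<forall>w\<in>ball 0 1. (P has_field_derivative g w) (at w)" "P 0 = 0" "w \<in> ball 0 1"
  shows "L w = P w"
proof -
  have "\<exists>c. \<forall>x\<in>ball 0 1. L x - P x = c"
  proof (rule has_field_derivative_zero_constant[OF convex_ball])
    fix x :: complex assume x: "x \<in> ball 0 1"
    with ball_S0 have "x \<in> S0" by blast
    have "((\<lambda>x. L x - P x) has_field_derivative g x - g x) (at x)"
      using assms(1,3) x \<open>x \<in> S0\<close> by (intro derivative_intros) auto
    thus "((\<lambda>x. L x - P x) has_field_derivative 0) (at x within ball 0 1)"
      by (simp add: has_field_derivative_at_within)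
  qed
  then obtain c where c: "\<And>x. x \<in> ball 0 1 \<Longrightarrow> L x - P x = c" by blast
  from c[of 0] assms(2,4) have "c = 0" by simp
  with c[OF assms(5)] show ?thesis by simp
qed

lemma boundary_eq:
  assumes "\<forall>x\<in>S0. (L has_field_derivative g x) (at x)" "L 0 = 0"
    "\<forall>w\<in>ball 0 1. (P has_field_derivative g w) (at w)" "P 0 = 0"
    "continuous_on (cball 0 1) P" "u \<in> S0" "norm u = 1"
  shows "L u = P u"
proof -
  let ?F = "at u within ball 0 1"
  have nt: "\<not> trivial_limit ?F"
    using assms(7) by (simp add: trivial_limit_within islimpt_ball)
  have "isCont L u" using assms(1,6) DERIV_isCont by blast
  hence "(L \<longlongrightarrow> L u) ?F" unfolding isCont_def by (rule tendsto_within_subset) simp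
  moreover have "(P \<longlongrightarrow> P u) (at u within cball 0 1)"
    using assms(5,7) by (auto simp: continuous_on_def)
  hence "(P \<longlongrightarrow> P u) ?F" by (rule tendsto_within_subset) auto
  moreover have "\<forall>\<^sub>F x in ?F. P x = L x"
    using ball_eq[OF assms(1-4)] by (auto simp: eventually_at_filter)
  ultimately have "(L \<longlongrightarrow> P u) ?F" by (metis Lim_transform_eventually)
  with \<open>(L \<longlongrightarrow> L u) ?F\<close> show ?thesis using nt tendsto_unique by blast
qed

lemma zero_series: "(\<lambda>n. (0::complex)^n / of_nat (Suc n)^m) sums 1"
proof -
  have "(\<lambda>n. (0::complex)^n / of_nat (Suc n)^m) = (\<lambda>n. if n = 0 then 1 else 0)"
    by (rule ext) simp
  thus ?thesis using sums_single[of 0 "\<lambda>_. 1::complex"] by simp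
qed

lemma series_g2:
  assumes "norm w < 1"
  shows "(\<Sum>n. w^n / of_nat (Suc n)^1) = g2 w"
proof (cases "w = 0")
  case True thus ?thesis using zero_series[of 1] by (simp add: g2_def sums_iff)
next
  case False
  have "(\<lambda>n. - ((-(-w))^n) / of_nat n) sums ln (1 + (-w))"
    by (rule Ln_series') (use assms in simp)
  hence "(\<lambda>n. - (w^n) / of_nat n) sums Ln (1 - w)" by simp
  hence "(\<lambda>n. - (w^Suc n) / of_nat (Suc n)) sums Ln (1 - w)"
    by (subst sums_Suc_iff) simp
  hence "(\<lambda>n. (- (w^Suc n) / of_nat (Suc n)) / (-w)) sums (Ln (1 - w) / (-w))"
    by (rule sums_divide)
  moreover have "(\<lambda>n. (- (w^Suc n) / of_nat (Suc n)) / (-w)) = (\<lambda>n. w^n / of_nat (Suc n)^1)"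
    using False by (auto simp: field_simps simp del: of_nat_Suc)
  ultimately show ?thesis using False by (simp add: g2_def sums_iff)
qed

lemma Pm2_deriv: "w \<in> ball 0 1 \<Longrightarrow> (Pm 2 has_field_derivative g2 w) (at w)"
  using Pm_deriv[of w 1] series_g2[of w] by (simp add: numeral_2_eq_2)

lemma Lp2_ball: "w \<in> ball 0 1 \<Longrightarrow> Lp2 w = Pm 2 w"
  by (rule ball_eq[where L=Lp2 and P="Pm 2" and g=g2]) (use Lp2_deriv Pm2_deriv Lp2_0 in auto)

lemma series_g3:
  assumes "norm w < 1"
  shows "(\<Sum>n. w^n / of_nat (Suc n)^2) = g3 w"
proof (cases "w = 0")
  case True thus ?thesis using zero_series[of 2] by (simp add: g3_def sums_iff)
next
  case False
  have "Pm 2 w = (\<Sum>n. w * (w^n / of_nat (Suc n)^2))" by (simp add: Pm_def mult_ac)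
  also have "\<dots> = w * (\<Sum>n. w^n / of_nat (Suc n)^2)"
    by (rule suminf_mult[OF summable_geo_like[OF assms]])
  finally have "(\<Sum>n. w^n / of_nat (Suc n)^2) = Pm 2 w / w" using False by simp
  also have "\<dots> = Lp2 w / w" using Lp2_ball[of w] assms by simp
  finally show ?thesis using False by (simp add: g3_def)
qed

lemma Pm3_deriv: "w \<in> ball 0 1 \<Longrightarrow> (Pm 3 has_field_derivative g3 w) (at w)"
  using Pm_deriv[of w 2] series_g3[of w] by (simp add: numeral_3_eq_3 numeral_2_eq_2)

lemma Lp2_boundary: "u \<in> S0 \<Longrightarrow> norm u = 1 \<Longrightarrow> Lp2 u = Pm 2 u"
  by (rule boundary_eq[where L=Lp2 and P="Pm 2" and g=g2]) (use Lp2_deriv Pm2_deriv Lp2_0 Pm_cont[of 0] in \<open>auto simp: numeral_2_eq_2\<close>)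

lemma Lp3_boundary: "u \<in> S0 \<Longrightarrow> norm u = 1 \<Longrightarrow> Lp3 u = Pm 3 u"
  by (rule boundary_eq[where L=Lp3 and P="Pm 3" and g=g3]) (use Lp3_deriv Pm3_deriv Lp3_0 Pm_cont[of 1] in \<open>auto simp: numeral_3_eq_3\<close>)


definition W :: "complex \<Rightarrow> complex" where "W s = exp (2 * of_real pi * \<i> * s)"

lemma W_real: "W (of_real x) = cis (2 * pi * x)"
  by (simp add: W_def cis_conv_exp mult_ac)

lemma W_deriv: "(W has_field_derivative (2 * of_real pi * \<i>) * W s) (at s)"
  unfolding W_def by (auto intro!: derivative_eq_intros)

lemma cos_lt1: assumes "0 < x" "x < 1" shows "cos (2 * pi * x) < 1"
proof -
  have "cos (2 * pi * x) \<noteq> 1"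
  proof
    assume "cos (2 * pi * x) = 1"
    then obtain n :: int where n: "2 * pi * x = n * 2 * pi" by (auto simp: cos_one_2pi_int)
    hence "x = of_int n" by simp
    with assms have "(0::real) < of_int n" "of_int n < (1::real)" by auto
    hence "0 < n" "n < 1" by simp_all
    thus False by simp
  qed
  thus ?thesis using cos_le_one[of "2*pi*x"] by linarith
qed

lemma W_S0: assumes "0 < x" "x < 1" shows "W (of_real x) \<in> S0"
  using cos_lt1[OF assms] by (simp add: W_real S0_def)

lemma W_norm: "norm (W (of_real x)) = 1"
  by (simp add: W_real)

lemma W_nz: "W s \<noteq> 0" by (simp add: W_def)

definition Phi :: "complex \<Rightarrow> complex" where
  "Phi s = s^2/2 - of_real (zeta 3) / (2 * of_real pi^2) + Lp3 (W s) / (2 * of_real pi^2)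
           - \<i> * s * Lp2 (W s) / (2 * of_real pi)"

definition Phi1 :: "complex \<Rightarrow> complex" where
  "Phi1 s = s + \<i> * Lp2 (W s) / (2 * of_real pi) - s * Ln (1 - W s)"

definition Phi2 :: "complex \<Rightarrow> complex" where
  "Phi2 s = 1 + 2 * of_real pi * \<i> * s * W s / (1 - W s)"

lemma Phi_deriv:
  assumes "W s \<in> S0"
  shows "(Phi has_field_derivative Phi1 s) (at s)"
proof -
  have d3: "((\<lambda>s. Lp3 (W s)) has_field_derivative D) (at s)"
    if "D = g3 (W s) * ((2 * of_real pi * \<i>) * W s)" for D
    unfolding that by (rule DERIV_chain2[OF Lp3_deriv[OF assms] W_deriv])
  have d2: "((\<lambda>s. Lp2 (W s)) has_field_derivative D) (at s)"
    if "D = g2 (W s) * ((2 * of_real pi * \<i>) * W s)" for D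
    unfolding that by (rule DERIV_chain2[OF Lp2_deriv[OF assms] W_deriv])
  show ?thesis
    unfolding Phi_def[abs_def]
    using W_nz[of s] by (auto intro!: d2 d3 derivative_eq_intros simp: g2_def g3_def Phi1_def field_simps power2_eq_square)
qed

lemma Phi1_deriv:
  assumes "W s \<in> S0"
  shows "(Phi1 has_field_derivative Phi2 s) (at s)"
proof -
  have d2: "((\<lambda>s. Lp2 (W s)) has_field_derivative D) (at s)"
    if "D = g2 (W s) * ((2 * of_real pi * \<i>) * W s)" for D
    unfolding that by (rule DERIV_chain2[OF Lp2_deriv[OF assms] W_deriv])
  have nn: "1 - W s \<notin> \<real>\<^sub>\<le>\<^sub>0" using S0_Ln[OF assms] .
  have dl: "((\<lambda>s. Ln (1 - W s)) has_field_derivative D) (at s)"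
    if "D = inverse (1 - W s) * (0 - (2 * of_real pi * \<i>) * W s)" for D
    unfolding that
    by (rule DERIV_chain2[where f=Ln and g="\<lambda>s. 1 - W s", OF has_field_derivative_Ln[OF nn]]) (intro W_deriv derivative_intros)
  have "1 - W s \<noteq> 0" using nn by auto
  then show ?thesis
    unfolding Phi1_def[abs_def]
    using W_nz[of s] by (auto intro!: d2 dl derivative_eq_intros simp: g2_def Phi2_def field_simps)
qed

lemma Re_deriv:
  assumes "(f has_field_derivative D) (at (of_real x))"
  shows "((\<lambda>x. Re (f (of_real x))) has_real_derivative Re D) (at x)"
proof -
  have "((\<lambda>x. f (of_real x)) has_vector_derivative D) (at x)"
    by (rule has_vector_derivative_real_field[OF assms])
  hence "((\<lambda>x. f (of_real x)) has_derivative (\<lambda>h. h *\<^sub>R D)) (at x)"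
    by (simp add: has_vector_derivative_def)
  hence "((\<lambda>x. Re (f (of_real x))) has_derivative (\<lambda>h. Re (h *\<^sub>R D))) (at x)"
    by (rule has_derivative_Re)
  moreover have "(\<lambda>h. Re (h *\<^sub>R D)) = (*) (Re D)" by (auto simp: mult.commute)
  ultimately show ?thesis by (simp add: has_field_derivative_def)
qed

lemma summable_Pm:
  assumes "norm (u::complex) \<le> 1"
  shows "summable (\<lambda>n. u^Suc n / of_nat (Suc n)^Suc (Suc m))"
proof (rule summable_comparison_test[of _ "\<lambda>n. inverse (real (Suc n)^2)"])
  show "summable (\<lambda>n. inverse (real (Suc n)^2))"
    using inverse_power_summable[of 2, where 'a=real] by (subst summable_Suc_iff) simp
  have "norm (u^Suc n / of_nat (Suc n)^Suc (Suc m)) \<le> inverse (real (Suc n)^2)" for n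
  proof -
    have "norm (u^Suc n / of_nat (Suc n)^Suc (Suc m)) = norm u ^ Suc n / real (Suc n)^Suc (Suc m)"
      by (simp add: norm_divide norm_power del: of_nat_Suc power_Suc)
    also have "\<dots> \<le> 1 / real (Suc n)^Suc (Suc m)"
      using assms by (intro divide_right_mono power_le_one) auto
    also have "\<dots> \<le> 1 / real (Suc n)^2"
      by (intro divide_left_mono power_increasing) (auto simp del: of_nat_Suc)
    finally show ?thesis by (simp add: field_simps)
  qed
  thus "\<exists>N. \<forall>n\<ge>N. norm (u^Suc n / of_nat (Suc n)^Suc (Suc m)) \<le> inverse (real (Suc n)^2)" by blast
qed

lemma of_nat_pow_complex: "(of_nat k ^ m :: complex) = of_real (real k ^ m)"
  by simp

lemma Cl3_eq: "Re (Pm 3 (cis t)) = Cl3 t"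
proof -
  have "Re (Pm 3 (cis t)) = (\<Sum>n. Re (cis t ^ Suc n / of_nat (Suc n)^3))"
    unfolding Pm_def using summable_Pm[of "cis t" 1] by (intro Re_suminf) (simp add: numeral_3_eq_3)
  also have "\<dots> = Cl3 t"
    unfolding Cl3_def
    by (intro suminf_cong) (simp only: of_nat_pow_complex Complex.DeMoivre Re_divide_of_real cis.sel)
  finally show ?thesis .
qed

lemma Cl2_eq: "Im (Pm 2 (cis t)) = Cl2 t"
proof -
  have "Im (Pm 2 (cis t)) = (\<Sum>n. Im (cis t ^ Suc n / of_nat (Suc n)^2))"
    unfolding Pm_def using summable_Pm[of "cis t" 0] by (intro Im_suminf) (simp add: numeral_2_eq_2)
  also have "\<dots> = Cl2 t"
    unfolding Cl2_def
    by (intro suminf_cong) (simp only: of_nat_pow_complex Complex.DeMoivre Im_divide_of_real cis.sel)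
  finally show ?thesis .
qed

definition Gdef :: "real \<Rightarrow> real" where
  "Gdef x = x^2/2 - zeta 3/(2*pi^2) + Cl3 (2*pi*x)/(2*pi^2) + x * Cl2 (2*pi*x)/(2*pi)"

definition G1def :: "real \<Rightarrow> real" where
  "G1def x = x - Cl2 (2*pi*x)/(2*pi) - x * ln (2 * sin (pi * x))"

lemma norm_1_minus_cis:
  assumes "0 < x" "x < 1"
  shows "norm (1 - cis (2 * pi * x)) = 2 * sin (pi * x)"
proof -
  have sp: "sin (pi * x) > 0" using assms by (intro sin_gt_zero) auto
  have "(norm (1 - cis (2 * pi * x)))^2 = (1 - cos (2 * (pi * x)))^2 + (sin (2 * (pi * x)))^2"
    by (simp add: cmod_power2 mult_ac)
  also have "\<dots> = (2 * sin (pi * x))^2"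
    unfolding cos_double_sin sin_double power_mult_distrib cos_squared_eq
    by (simp add: power2_eq_square algebra_simps)
  finally have "(norm (1 - cis (2 * pi * x)))^2 = (2 * sin (pi * x))^2" .
  moreover have "0 \<le> 2 * sin (pi * x)" using sp by simp
  ultimately show ?thesis using power2_eq_iff_nonneg[OF norm_ge_zero] by blast
qed

lemma Re_Phi:
  assumes "0 < x" "x < 1"
  shows "Re (Phi (of_real x)) = Gdef x"
proof -
  have e3: "Lp3 (W (of_real x)) = Pm 3 (cis (2*pi*x))"
    using Lp3_boundary[OF W_S0[OF assms] W_norm] by (simp add: W_real)
  have e2: "Lp2 (W (of_real x)) = Pm 2 (cis (2*pi*x))"
    using Lp2_boundary[OF W_S0[OF assms] W_norm] by (simp add: W_real)
  show ?thesis
    unfolding Phi_def Gdef_def e3 e2 Cl3_eq[symmetric] Cl2_eq[symmetric]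
    by (simp add: Re_divide Im_divide field_simps power2_eq_square)
qed

lemma Re_Phi1:
  assumes "0 < x" "x < 1"
  shows "Re (Phi1 (of_real x)) = G1def x"
proof -
  have e2: "Lp2 (cis (2*pi*x)) = Pm 2 (cis (2*pi*x))"
    using Lp2_boundary[OF W_S0[OF assms] W_norm] by (simp add: W_real)
  have nz: "1 - cis (2*pi*x) \<noteq> 0"
    using norm_1_minus_cis[OF assms] sin_gt_zero[of "pi*x"] assms by auto
  have "Re (Ln (1 - cis (2*pi*x))) = ln (2 * sin (pi * x))"
    using nz norm_1_minus_cis[OF assms] by simp
  thus ?thesis
    unfolding Phi1_def G1def_def W_real e2 Cl2_eq[symmetric]
    by (simp add: Re_divide Im_divide field_simps power2_eq_square)
qed

lemma Re_Phi2:
  assumes "0 < x" "x < 1"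
  shows "Re (Phi2 (of_real x)) = 1 - pi * x * cot (pi * x)"
proof -
  define a where "a = pi * x"
  have sp: "sin a > 0" unfolding a_def using assms by (intro sin_gt_zero) auto
  have c: "cos (2*pi*x) = 1 - 2 * sin a ^ 2" unfolding a_def using cos_double_sin[of "pi*x"] by (simp add: mult_ac)
  have s: "sin (2*pi*x) = 2 * sin a * cos a" unfolding a_def using sin_double[of "pi*x"] by (simp add: mult_ac)
  have "Re (Phi2 (of_real x)) = 1 + 2 * pi * x * ((- sin (2*pi*x) * (1 - cos (2*pi*x)) - cos (2*pi*x) * sin (2*pi*x))
            / ((1 - cos (2*pi*x))^2 + (sin (2*pi*x))^2))"
    unfolding Phi2_def W_real by (simp add: Re_divide field_simps power2_eq_square)
  also have "(- sin (2*pi*x) * (1 - cos (2*pi*x)) - cos (2*pi*x) * sin (2*pi*x)) = - (2 * sin a * cos a)"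
    unfolding c s by (simp add: algebra_simps)
  also have "(1 - cos (2*pi*x))^2 + (sin (2*pi*x))^2 = 4 * sin a ^ 2"
    unfolding c s power_mult_distrib cos_squared_eq by (simp add: power2_eq_square algebra_simps)
  also have "1 + 2 * pi * x * (- (2 * sin a * cos a) / (4 * sin a ^ 2)) = 1 - pi * x * cot a"
    unfolding cot_def using sp by (simp add: field_simps power2_eq_square)
  finally show ?thesis by (simp add: a_def)
qed


lemma Gdef_deriv:
  assumes "0 < x" "x < 1"
  shows "(Gdef has_real_derivative G1def x) (at x)"
proof -
  have "((\<lambda>x. Re (Phi (of_real x))) has_real_derivative Re (Phi1 (of_real x))) (at x)"
    by (rule Re_deriv[OF Phi_deriv[OF W_S0[OF assms]]])
  hence "((\<lambda>x. Re (Phi (of_real x))) has_real_derivative G1def x) (at x)"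
    using Re_Phi1[OF assms] by simp
  thus ?thesis
    by (rule has_field_derivative_transform_within_open[where S="{0<..<1}"]) (use assms Re_Phi in auto)
qed

lemma G1def_deriv:
  assumes "0 < x" "x < 1"
  shows "(G1def has_real_derivative (1 - pi * x * cot (pi * x))) (at x)"
proof -
  have "((\<lambda>x. Re (Phi1 (of_real x))) has_real_derivative Re (Phi2 (of_real x))) (at x)"
    by (rule Re_deriv[OF Phi1_deriv[OF W_S0[OF assms]]])
  hence "((\<lambda>x. Re (Phi1 (of_real x))) has_real_derivative (1 - pi * x * cot (pi * x))) (at x)"
    using Re_Phi2[OF assms] by simp
  thus ?thesis
    by (rule has_field_derivative_transform_within_open[where S="{0<..<1}"]) (use assms Re_Phi1 in auto)
qed

lemma summable_inv_sq: "summable (\<lambda>n. inverse (real (Suc n)^2))"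
  using inverse_power_summable[of 2, where 'a=real] by (subst summable_Suc_iff) simp

lemma cont_Cl2: "continuous_on UNIV Cl2"
proof -
  have "uniform_limit UNIV (\<lambda>n (x::real). \<Sum>i<n. sin (real (Suc i) * x) / (real (Suc i))^2)
          (\<lambda>x. suminf (\<lambda>i. sin (real (Suc i) * x) / (real (Suc i))^2)) sequentially"
  proof (rule Weierstrass_m_test[where M="\<lambda>n. inverse (real (Suc n)^2)"])
    show "summable (\<lambda>n. inverse (real (Suc n)^2))" by (rule summable_inv_sq)
    fix n and x :: real
    show "norm (sin (real (Suc n) * x) / (real (Suc n))^2) \<le> inverse (real (Suc n)^2)"
      using abs_sin_le_one[of "real (Suc n) * x"] by (simp add: field_simps del: of_nat_Suc)
  qed
  hence "continuous_on UNIV (\<lambda>x::real. suminf (\<lambda>i. sin (real (Suc i) * x) / (real (Suc i))^2))"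
    by (rule uniform_limit_theorem[rotated]) (auto intro!: always_eventually continuous_intros)
  thus ?thesis by (simp add: Cl2_def[abs_def])
qed

lemma cont_Cl3: "continuous_on UNIV Cl3"
proof -
  have "uniform_limit UNIV (\<lambda>n (x::real). \<Sum>i<n. cos (real (Suc i) * x) / (real (Suc i))^3)
          (\<lambda>x. suminf (\<lambda>i. cos (real (Suc i) * x) / (real (Suc i))^3)) sequentially"
  proof (rule Weierstrass_m_test[where M="\<lambda>n. inverse (real (Suc n)^2)"])
    show "summable (\<lambda>n. inverse (real (Suc n)^2))" by (rule summable_inv_sq)
    fix n and x :: real
    have "norm (cos (real (Suc n) * x) / (real (Suc n))^3) \<le> 1 / (real (Suc n))^3"
      using abs_cos_le_one[of "real (Suc n) * x"] by (simp add: field_simps del: of_nat_Suc)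
    also have "\<dots> \<le> 1 / (real (Suc n))^2"
      by (intro divide_left_mono power_increasing) (auto simp del: of_nat_Suc)
    finally show "norm (cos (real (Suc n) * x) / (real (Suc n))^3) \<le> inverse (real (Suc n)^2)"
      by (simp add: field_simps)
  qed
  hence "continuous_on UNIV (\<lambda>x::real. suminf (\<lambda>i. cos (real (Suc i) * x) / (real (Suc i))^3))"
    by (rule uniform_limit_theorem[rotated]) (auto intro!: always_eventually continuous_intros)
  thus ?thesis by (simp add: Cl3_def[abs_def])
qed

lemma Cl2_0: "Cl2 0 = 0" by (simp add: Cl2_def)
lemma Cl3_0: "Cl3 0 = zeta 3"
  unfolding Cl3_def zeta_def by simp

lemma isCont_Cl2: "isCont Cl2 x"
  using cont_Cl2 by (simp add: continuous_on_eq_continuous_at)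
lemma isCont_Cl3: "isCont Cl3 x"
  using cont_Cl3 by (simp add: continuous_on_eq_continuous_at)

lemma cont_Gdef_on: "continuous_on UNIV Gdef"
proof -
  have c2: "continuous_on UNIV (\<lambda>x. Cl2 (2*pi*x))"
    by (rule continuous_on_compose2[OF cont_Cl2]) (auto intro!: continuous_intros)
  have c3: "continuous_on UNIV (\<lambda>x. Cl3 (2*pi*x))"
    by (rule continuous_on_compose2[OF cont_Cl3]) (auto intro!: continuous_intros)
  show ?thesis unfolding Gdef_def[abs_def]
    by (intro continuous_on_add continuous_on_diff continuous_on_mult continuous_on_divide
        continuous_on_const continuous_on_id continuous_on_power c2 c3) auto
qed

lemma cont_Gdef: "isCont Gdef x"
  using cont_Gdef_on by (simp add: continuous_on_eq_continuous_at)

lemma Gdef_0: "Gdef 0 = 0"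
  by (simp add: Gdef_def Cl3_0)

lemma G1def_lim: "(G1def \<longlongrightarrow> 0) (at_right 0)"
proof -
  have a: "((\<lambda>x::real. x * ln (2 * sin (pi * x))) \<longlongrightarrow> 0) (at_right 0)" by real_asymp
  have "((\<lambda>x::real. Cl2 (2*pi*x)) \<longlongrightarrow> Cl2 (2*pi*0)) (at_right 0)"
    by (intro tendsto_intros isCont_tendsto_compose[OF isCont_Cl2])
  hence b: "((\<lambda>x::real. Cl2 (2*pi*x)) \<longlongrightarrow> 0) (at_right 0)" by (simp add: Cl2_0)
  have "((\<lambda>x::real. x - Cl2 (2*pi*x)/(2*pi) - x * ln (2 * sin (pi * x))) \<longlongrightarrow> 0 - 0/(2*pi) - 0) (at_right 0)"
    by (intro tendsto_intros a b) auto
  thus ?thesis by (simp add: G1def_def[abs_def])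
qed


definition a :: "nat \<Rightarrow> real" where "a k = zeta (2 * real (Suc k))"
definition BB :: real where "BB = (\<Sum>n. inverse (real (Suc n)^2))"

lemma summable_zeta_terms: "summable (\<lambda>n. 1 / real (Suc n)^(2*Suc k))"
proof (rule summable_comparison_test[OF _ summable_inv_sq])
  have "norm (1 / real (Suc n)^(2*Suc k)) \<le> inverse (real (Suc n)^2)" for n
  proof -
    have "norm (1 / real (Suc n)^(2*Suc k)) = 1 / real (Suc n)^(2*Suc k)" by simp
    also have "\<dots> \<le> 1 / real (Suc n)^2"
      by (intro divide_left_mono power_increasing) (auto simp del: of_nat_Suc)
    finally show ?thesis by (simp add: field_simps)
  qed
  thus "\<exists>N. \<forall>n\<ge>N. norm (1 / real (Suc n)^(2*Suc k)) \<le> inverse (real (Suc n)^2)" by blast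
qed

lemma a_eq: "a k = (\<Sum>n. 1 / real (Suc n)^(2*Suc k))"
proof -
  have "2 * real (Suc k) = real (2 * Suc k)" by simp
  thus ?thesis unfolding a_def zeta_def by (simp only: powr_realpow of_nat_0_less_iff zero_less_Suc)
qed

lemma a_nonneg: "0 \<le> a k"
  unfolding a_eq by (intro suminf_nonneg summable_zeta_terms) auto

lemma a_le: "a k \<le> BB"
  unfolding a_eq BB_def
proof (rule suminf_le[OF _ summable_zeta_terms summable_inv_sq])
  fix n
  have "1 / real (Suc n)^(2*Suc k) \<le> 1 / real (Suc n)^2"
    by (intro divide_left_mono power_increasing) (auto simp del: of_nat_Suc)
  thus "1 / real (Suc n)^(2*Suc k) \<le> inverse (real (Suc n)^2)" by (simp add: field_simps)
qed

definition Ft :: "nat \<Rightarrow> real \<Rightarrow> real" where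
  "Ft k x = a k * x^(2*k+4) / ((real k + 2) * (2*real k + 3))"
definition F1t :: "nat \<Rightarrow> real \<Rightarrow> real" where
  "F1t k x = 2 * a k * x^(2*k+3) / (2*real k + 3)"
definition F2t :: "nat \<Rightarrow> real \<Rightarrow> real" where
  "F2t k x = 2 * a k * x^(2*k+2)"

definition "FF x = (\<Sum>k. Ft k x)"
definition "FF1 x = (\<Sum>k. F1t k x)"
definition "FF2 x = (\<Sum>k. F2t k x)"

lemma Ft_deriv: "(Ft k has_real_derivative F1t k x) (at x within S)"
proof -
  have "((\<lambda>x. x^(2*k+4)) has_real_derivative real (2*k+4) * x^(2*k+3)) (at x within S)"
    using DERIV_pow[of "2*k+4" x S] by (simp add: add.commute)
  hence "((\<lambda>x. a k * x^(2*k+4) / ((real k + 2) * (2*real k + 3))) has_real_derivative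
          a k * (real (2*k+4) * x^(2*k+3)) / ((real k + 2) * (2*real k + 3))) (at x within S)"
    by (intro DERIV_cdivide DERIV_cmult)
  moreover have "a k * (real (2*k+4) * x^(2*k+3)) / ((real k + 2) * (2*real k + 3)) = F1t k x"
  proof -
    have e: "real (2*k+4) = 2 * (real k + 2)" by simp
    have nz: "(real k + 2) \<noteq> 0" by linarith
    have "a k * (2 * (real k + 2) * x^(2*k+3)) / ((real k + 2) * (2*real k + 3))
          = ((real k + 2) * (2 * a k * x^(2*k+3))) / ((real k + 2) * (2*real k + 3))"
      by (simp only: mult_ac)
    also have "\<dots> = 2 * a k * x^(2*k+3) / (2*real k + 3)"
      by (rule mult_divide_mult_cancel_left[OF nz])
    finally show ?thesis unfolding e F1t_def .
  qed
  ultimately show ?thesis unfolding Ft_def[abs_def] by simp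
qed

lemma F1t_deriv: "(F1t k has_real_derivative F2t k x) (at x within S)"
proof -
  have "((\<lambda>x. x^(2*k+3)) has_real_derivative real (2*k+3) * x^(2*k+2)) (at x within S)"
    using DERIV_pow[of "2*k+3" x S] by (simp add: add.commute)
  hence "((\<lambda>x. 2 * a k * x^(2*k+3) / (2*real k + 3)) has_real_derivative
          2 * a k * (real (2*k+3) * x^(2*k+2)) / (2*real k + 3)) (at x within S)"
    by (intro DERIV_cdivide DERIV_cmult)
  moreover have "2 * a k * (real (2*k+3) * x^(2*k+2)) / (2*real k + 3) = F2t k x"
  proof -
    have e: "real (2*k+3) = 2 * real k + 3" by simp
    have "2 * real k + 3 \<noteq> 0" by linarith
    thus ?thesis unfolding e F2t_def by (simp add: field_simps)
  qed
  ultimately show ?thesis unfolding F1t_def[abs_def] by simp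
qed

lemma BB_nonneg: "0 \<le> BB" using a_nonneg a_le order_trans by blast

lemma pow_bound:
  fixes y r :: real
  assumes "\<bar>y\<bar> < r" "r < 1" and "k \<le> m"
  shows "\<bar>y\<bar>^m \<le> r^k"
proof -
  have "\<bar>y\<bar>^m \<le> r^m" by (rule power_mono) (use assms in auto)
  also have "\<dots> \<le> r^k" by (rule power_decreasing) (use assms in auto)
  finally show ?thesis .
qed

lemma series_deriv_aux:
  fixes f f' :: "nat \<Rightarrow> real \<Rightarrow> real"
  assumes "\<bar>x\<bar> < 1"
    and der: "\<And>k y. (f k has_real_derivative f' k y) (at y within {-((1+\<bar>x\<bar>)/2)<..<(1+\<bar>x\<bar>)/2})"
    and bnd: "\<And>k y. \<bar>y\<bar> < (1+\<bar>x\<bar>)/2 \<Longrightarrow> \<bar>f' k y\<bar> \<le> 2 * BB * ((1+\<bar>x\<bar>)/2)^k"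
    and z: "\<And>k. f k 0 = 0"
  shows "((\<lambda>y. \<Sum>k. f k y) has_real_derivative (\<Sum>k. f' k x)) (at x)"
proof -
  define r where "r = (1+\<bar>x\<bar>)/2"
  have r: "\<bar>x\<bar> < r" "r < 1" "0 < r" using assms(1) by (auto simp: r_def)
  have unif: "uniformly_convergent_on {-r<..<r} (\<lambda>n y. \<Sum>i<n. f' i y)"
  proof (rule Weierstrass_m_test'[where M="\<lambda>k. 2 * BB * r^k"])
    show "summable (\<lambda>k. 2 * BB * r^k)" using r by (intro summable_mult summable_geometric) auto
    fix k and y :: real assume "y \<in> {-r<..<r}"
    hence "\<bar>y\<bar> < r" by auto
    thus "norm (f' k y) \<le> 2 * BB * r^k" using bnd unfolding r_def by auto
  qed
  show ?thesis
    by (rule has_field_derivative_series'(2)[OF convex_real_interval(8) der[folded r_def] unif, of 0])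
       (use r z in \<open>auto simp: interior_open\<close>)
qed

lemma FF_deriv:
  assumes "\<bar>x\<bar> < 1"
  shows "(FF has_real_derivative FF1 x) (at x)"
  unfolding FF_def[abs_def] FF1_def
proof (rule series_deriv_aux[OF assms Ft_deriv])
  fix k and y :: real assume y: "\<bar>y\<bar> < (1+\<bar>x\<bar>)/2"
  have r1: "(1+\<bar>x\<bar>)/2 < 1" using assms by auto
  have "\<bar>F1t k y\<bar> = 2 * a k * \<bar>y\<bar>^(2*k+3) / (2*real k + 3)"
    using a_nonneg[of k] by (simp add: F1t_def abs_mult power_abs)
  also have "\<dots> \<le> 2 * a k * \<bar>y\<bar>^(2*k+3)"
    using a_nonneg[of k] by (intro div_le_self_real) auto
  also have "\<dots> \<le> 2 * BB * ((1+\<bar>x\<bar>)/2)^k"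
    using a_le[of k] a_nonneg[of k] pow_bound[OF y r1, of k "2*k+3"]
    by (intro mult_mono) auto
  finally show "\<bar>F1t k y\<bar> \<le> 2 * BB * ((1+\<bar>x\<bar>)/2)^k" .
qed (simp add: Ft_def power_0_left)

lemma FF1_deriv:
  assumes "\<bar>x\<bar> < 1"
  shows "(FF1 has_real_derivative FF2 x) (at x)"
  unfolding FF1_def[abs_def] FF2_def
proof (rule series_deriv_aux[OF assms F1t_deriv])
  fix k and y :: real assume y: "\<bar>y\<bar> < (1+\<bar>x\<bar>)/2"
  have r1: "(1+\<bar>x\<bar>)/2 < 1" using assms by auto
  have "\<bar>F2t k y\<bar> = 2 * a k * \<bar>y\<bar>^(2*k+2)"
    using a_nonneg[of k] by (simp add: F2t_def abs_mult power_abs)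
  also have "\<dots> \<le> 2 * BB * ((1+\<bar>x\<bar>)/2)^k"
    using a_le[of k] a_nonneg[of k] pow_bound[OF y r1, of k "2*k+2"]
    by (intro mult_mono) auto
  finally show "\<bar>F2t k y\<bar> \<le> 2 * BB * ((1+\<bar>x\<bar>)/2)^k" .
qed (simp add: F1t_def power_0_left)

lemma FF_0: "FF 0 = 0" by (simp add: FF_def Ft_def power_0_left)
lemma FF1_0: "FF1 0 = 0" by (simp add: FF1_def F1t_def power_0_left)

lemma Ft_bound:
  assumes "\<bar>y\<bar> \<le> 1"
  shows "\<bar>Ft k y\<bar> \<le> BB * inverse (real (Suc k)^2)"
proof -
  have pos: "0 < (real k + 2) * (2*real k + 3)" by simp
  have "\<bar>Ft k y\<bar> = a k * \<bar>y\<bar>^(2*k+4) / ((real k + 2) * (2*real k + 3))"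
    using a_nonneg[of k] by (simp add: Ft_def abs_mult power_abs)
  also have "\<dots> \<le> BB / ((real k + 2) * (2*real k + 3))"
  proof (rule divide_right_mono)
    have "\<bar>y\<bar>^(2*k+4) \<le> 1" by (rule power_le_one) (use assms in auto)
    hence "a k * \<bar>y\<bar>^(2*k+4) \<le> BB * 1"
      by (rule mult_mono[OF a_le]) (use BB_nonneg in auto)
    thus "a k * \<bar>y\<bar>^(2*k+4) \<le> BB" by simp
  qed (use pos in auto)
  also have "\<dots> \<le> BB / (real (Suc k)^2)"
  proof (rule divide_left_mono[OF _ BB_nonneg])
    show "real (Suc k)^2 \<le> (real k + 2) * (2*real k + 3)"
      by (simp add: power2_eq_square algebra_simps)
    show "0 < (real k + 2) * (2*real k + 3) * real (Suc k)^2"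
      using pos by (intro mult_pos_pos) (auto simp del: of_nat_Suc)
  qed
  finally show ?thesis by (simp add: field_simps)
qed

lemma cont_FF: "continuous_on {-1..1} FF"
proof -
  have "uniform_limit {-1..1} (\<lambda>n (x::real). \<Sum>i<n. Ft i x) (\<lambda>x. suminf (\<lambda>i. Ft i x)) sequentially"
  proof (rule Weierstrass_m_test[where M="\<lambda>n. BB * inverse (real (Suc n)^2)"])
    show "summable (\<lambda>n. BB * inverse (real (Suc n)^2))" by (intro summable_mult summable_inv_sq)
    fix n and x :: real assume "x \<in> {-1..1}"
    thus "norm (Ft n x) \<le> BB * inverse (real (Suc n)^2)" using Ft_bound[of x n] by auto
  qed
  hence "continuous_on {-1..1} (\<lambda>x::real. suminf (\<lambda>i. Ft i x))"
    by (rule uniform_limit_theorem[rotated]) (auto intro!: always_eventually continuous_intros simp: Ft_def)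
  thus ?thesis by (simp add: FF_def[abs_def])
qed


lemma h_bound:
  fixes x :: real
  assumes "\<bar>x\<bar> < 1"
  shows "x^2 / (real (Suc n)^2 - x^2) \<le> (x^2 / (1 - x^2)) * inverse (real (Suc n)^2)"
    and "0 < real (Suc n)^2 - x^2"
proof -
  have x2: "x^2 < 1" using assms by (simp add: abs_square_less_1)
  have n1: "1 \<le> real (Suc n)^2" by (simp del: of_nat_Suc)
  have "x^2 * 1 \<le> x^2 * real (Suc n)^2" by (rule mult_left_mono) (use n1 in auto)
  hence key: "(1 - x^2) * real (Suc n)^2 \<le> real (Suc n)^2 - x^2"
    by (simp add: algebra_simps)
  show pos: "0 < real (Suc n)^2 - x^2" using n1 x2 by linarith
  have "x^2 / (real (Suc n)^2 - x^2) \<le> x^2 / ((1 - x^2) * real (Suc n)^2)"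
    by (rule divide_left_mono[OF key]) (use x2 n1 pos in \<open>auto intro!: mult_pos_pos\<close>)
  thus "x^2 / (real (Suc n)^2 - x^2) \<le> (x^2 / (1 - x^2)) * inverse (real (Suc n)^2)"
    by (simp add: field_simps)
qed

lemma swap_series:
  fixes x :: real
  assumes "\<bar>x\<bar> < 1"
  shows "(\<lambda>k. a k * x^(2*Suc k)) sums (\<Sum>n. x^2 / (real (Suc n)^2 - x^2))"
proof -
  define c where "c = (\<lambda>(n,k). x^(2*Suc k) / real (Suc n)^(2*Suc k))"
  define h where "h = (\<lambda>n. x^2 / (real (Suc n)^2 - x^2))"
  have x2: "x^2 < 1" using assms by (simp add: abs_square_less_1)
  have c_nonneg: "c (n,k) \<ge> 0" for n k
  proof -
    have "0 \<le> x^(2*Suc k)" unfolding power_mult by simp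
    thus ?thesis unfolding c_def prod.case by (rule divide_nonneg_nonneg) simp
  qed
  have row: "((\<lambda>k. c (n,k)) has_sum h n) UNIV" for n
  proof -
    define q where "q = x^2 / real (Suc n)^2"
    have q: "0 \<le> q" "q < 1"
    proof -
      show "0 \<le> q" by (simp add: q_def)
      have "x^2 / real (Suc n)^2 \<le> x^2" by (intro div_le_self_real) (auto simp del: of_nat_Suc)
      thus "q < 1" unfolding q_def using x2 by linarith
    qed
    have "(\<lambda>k. q^k) sums (1 / (1 - q))" using q by (intro geometric_sums) auto
    hence "(\<lambda>k. q * q^k) sums (q * (1 / (1 - q)))" by (rule sums_mult)
    moreover have "(\<lambda>k. q * q^k) = (\<lambda>k. c (n,k))"
      by (rule ext) (simp only: power_Suc[symmetric], simp only: c_def prod.case q_def power_divide power_mult)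
    moreover have "q * (1 / (1 - q)) = h n"
      using h_bound(2)[OF assms, of n] unfolding q_def h_def by (simp add: field_simps)
    ultimately have "(\<lambda>k. c (n,k)) sums h n" by simp
    thus ?thesis by (rule sums_nonneg_imp_has_sum) (rule c_nonneg)
  qed
  have hsum: "summable h"
  proof (rule summable_comparison_test[OF _ summable_mult[OF summable_inv_sq, of "x^2/(1-x^2)"]])
    have "norm (h n) \<le> x^2/(1-x^2) * inverse (real (Suc n)^2)" for n
    proof -
      have hn: "0 \<le> h n" using h_bound(2)[OF assms, of n] by (simp add: h_def)
      have "norm (h n) = h n" by (simp only: real_norm_def abs_of_nonneg[OF hn])
      moreover have "h n \<le> x^2/(1-x^2) * inverse (real (Suc n)^2)"
        unfolding h_def by (rule h_bound(1)[OF assms])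
      ultimately show ?thesis by simp
    qed
    thus "\<exists>N. \<forall>n\<ge>N. norm (h n) \<le> x^2/(1-x^2) * inverse (real (Suc n)^2)" by blast
  qed
  have h_nonneg: "h n \<ge> 0" for n using h_bound(2)[OF assms, of n] by (simp add: h_def)
  have hhas: "(h has_sum (\<Sum>n. h n)) UNIV"
    using hsum h_nonneg by (intro sums_nonneg_imp_has_sum) (auto simp: summable_sums)
  have sumAB: "c summable_on (UNIV \<times> UNIV)"
    using summable_on_SigmaI[where f=c and A=UNIV and B="\<lambda>_. UNIV" and g=h, OF row]
          has_sum_imp_summable[OF hhas] c_nonneg by auto
  have "(c has_sum (\<Sum>n. h n)) (UNIV \<times> UNIV)"
    by (rule has_sum_SigmaI[OF row hhas sumAB])
  hence sw: "((\<lambda>(k,n). c (n,k)) has_sum (\<Sum>n. h n)) (UNIV \<times> UNIV)"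
    by (subst (asm) has_sum_swap) simp
  have col: "((\<lambda>n. c (n,k)) has_sum (a k * x^(2*Suc k))) UNIV" for k
  proof -
    have "(\<lambda>n. 1 / real (Suc n)^(2*Suc k)) sums a k"
      unfolding a_eq by (rule summable_sums[OF summable_zeta_terms])
    hence "(\<lambda>n. x^(2*Suc k) * (1 / real (Suc n)^(2*Suc k))) sums (x^(2*Suc k) * a k)"
      by (rule sums_mult)
    hence "(\<lambda>n. c (n,k)) sums (a k * x^(2*Suc k))" by (simp add: c_def mult_ac)
    thus ?thesis by (rule sums_nonneg_imp_has_sum) (rule c_nonneg)
  qed
  have "((\<lambda>k. a k * x^(2*Suc k)) has_sum (\<Sum>n. h n)) UNIV"
    using has_sum_Sigma'[where f="\<lambda>(k,n). c (n,k)" and A=UNIV and B="\<lambda>_. UNIV", OF sw] col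
    by auto
  thus ?thesis unfolding h_def by (rule has_sum_imp_sums)
qed

lemma cot_pf:
  fixes x :: real
  assumes x: "0 < x" "x < 1"
  shows "(\<lambda>n. 2 * x^2 / (real (Suc n)^2 - x^2)) sums (1 - pi * x * cot (pi * x))"
proof -
  define fl where "fl = (\<lambda>n (y::real). ln (1 - y^2 / real (Suc n)^2))"
  define fl' where "fl' = (\<lambda>n (y::real). - 2 * y / (real (Suc n)^2 - y^2))"
  define r where "r = (1 + x) / 2"
  have r: "x < r" "r < 1" "0 < r" using x by (auto simp: r_def)
  have r2: "r^2 < 1" using r by (simp add: abs_square_less_1)
  have pos: "0 < 1 - y^2 / real (Suc n)^2" if "\<bar>y\<bar> < 1" for y n
  proof -
    have "y^2 < 1" using that by (simp add: abs_square_less_1)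
    moreover have "y^2 / real (Suc n)^2 \<le> y^2" by (intro div_le_self_real) (auto simp del: of_nat_Suc)
    ultimately show ?thesis by linarith
  qed
  have der: "(fl n has_real_derivative fl' n y) (at y within {-r<..<r})" if "y \<in> {-r<..<r}" for n y
  proof -
    have y: "\<bar>y\<bar> < 1" using that r by auto
    have p: "0 < 1 - y^2 / real (Suc n)^2" by (rule pos[OF y])
    have p2: "0 < real (Suc n)^2 - y^2" using h_bound(2)[OF y] .
    define N where "N = real (Suc n)^2"
    have N: "0 < N" "N - y^2 \<noteq> 0" using p2 by (auto simp: N_def)
    have d1: "((\<lambda>y. 1 - y^2 / N) has_real_derivative (0 - (2 * y) / N)) (at y within {-r<..<r})"
      using N by (auto intro!: derivative_eq_intros)
    have "((\<lambda>y. ln (1 - y^2 / N)) has_real_derivative inverse (1 - y^2 / N) * (0 - (2 * y) / N)) (at y within {-r<..<r})"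
      by (rule DERIV_chain2[where f=ln, OF DERIV_ln d1]) (use p in \<open>simp add: N_def\<close>)
    moreover have "inverse (1 - y^2 / N) * (0 - (2 * y) / N) = - 2 * y / (N - y^2)"
      using N by (simp add: field_simps)
    ultimately show ?thesis unfolding fl_def fl'_def N_def by simp
  qed
  have bnd: "\<bar>fl' n y\<bar> \<le> (2 / (1 - r^2)) * inverse (real (Suc n)^2)" if "\<bar>y\<bar> < r" for n y
  proof -
    have y: "\<bar>y\<bar> < 1" using that r by auto
    have "\<bar>y\<bar>^2 \<le> r^2" by (rule power_mono) (use that in auto)
    hence y2: "y^2 \<le> r^2" by simp
    have n1: "1 \<le> real (Suc n)^2" by (simp del: of_nat_Suc)
    have key: "(1 - r^2) * real (Suc n)^2 \<le> real (Suc n)^2 - y^2"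
    proof -
      have "r^2 * 1 \<le> r^2 * real (Suc n)^2" by (rule mult_left_mono) (use n1 in auto)
      hence "y^2 \<le> r^2 * real (Suc n)^2" using y2 by simp
      thus ?thesis by (simp add: algebra_simps)
    qed
    have "\<bar>fl' n y\<bar> = 2 * \<bar>y\<bar> / (real (Suc n)^2 - y^2)"
      using h_bound(2)[OF y, of n] by (simp add: fl'_def abs_mult abs_divide)
    also have "\<dots> \<le> 2 / ((1 - r^2) * real (Suc n)^2)"
      using y key r2 n1 by (intro frac_le) auto
    finally show ?thesis by (simp add: field_simps)
  qed
  have Msum: "summable (\<lambda>n. (2 / (1 - r^2)) * inverse (real (Suc n)^2))"
    by (intro summable_mult summable_inv_sq)
  have unif: "uniformly_convergent_on {-r<..<r} (\<lambda>n y. \<Sum>i<n. fl' i y)"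
    by (rule Weierstrass_m_test'[OF _ Msum]) (use bnd in auto)
  have D1: "((\<lambda>y. \<Sum>n. fl n y) has_real_derivative (\<Sum>n. fl' n x)) (at x)"
    by (rule has_field_derivative_series'(2)[OF convex_real_interval(8) der unif, of 0])
       (use r x in \<open>auto simp: interior_open fl_def\<close>)
  have sums_fl: "(\<lambda>n. fl n y) sums (ln (sin (pi * y)) - ln (pi * y))" if y: "0 < y" "y < 1" for y
  proof -
    have sp: "0 < sin (pi * y)" using y by (intro sin_gt_zero) auto
    have "(\<lambda>n. \<Prod>k=1..n. 1 - y^2 / of_nat k^2) \<longlonglongrightarrow> sin (pi * y) / (pi * y)"
      using sin_product_formula_real'[of y] y by simp
    hence "(\<lambda>n. \<Prod>k<n. 1 - y^2 / real (Suc k)^2) \<longlonglongrightarrow> sin (pi * y) / (pi * y)"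
      by (simp add: prod.atLeast1_atMost_eq del: of_nat_Suc)
    hence "(\<lambda>n. ln (\<Prod>k<n. 1 - y^2 / real (Suc k)^2)) \<longlonglongrightarrow> ln (sin (pi * y) / (pi * y))"
      by (rule tendsto_ln) (use sp y in simp)
    moreover have "ln (\<Prod>k<n. 1 - y^2 / real (Suc k)^2) = (\<Sum>k<n. fl k y)" for n
      unfolding fl_def using pos[of y] y by (subst ln_prod) (auto simp del: of_nat_Suc)
    moreover have "ln (sin (pi * y) / (pi * y)) = ln (sin (pi * y)) - ln (pi * y)"
      using sp y by (simp add: ln_div)
    ultimately show ?thesis by (simp add: sums_def)
  qed
  have D2: "((\<lambda>y. ln (sin (pi * y)) - ln (pi * y)) has_real_derivative (\<Sum>n. fl' n x)) (at x)"
    by (rule has_field_derivative_transform_within_open[OF D1, where S="{0<..<1}"])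
       (use x sums_fl in \<open>auto simp: sums_iff\<close>)
  have sp: "0 < sin (pi * x)" using x by (intro sin_gt_zero) auto
  have D3: "((\<lambda>y. ln (sin (pi * y)) - ln (pi * y)) has_real_derivative (pi * cot (pi * x) - 1 / x)) (at x)"
    using sp x by (auto intro!: derivative_eq_intros simp: cot_def field_simps)
  have eq: "(\<Sum>n. fl' n x) = pi * cot (pi * x) - 1 / x" using DERIV_unique[OF D2 D3] .
  have "summable (\<lambda>n. fl' n x)"
    by (rule summable_comparison_test[OF _ Msum]) (use bnd[of x] r x in auto)
  hence "(\<lambda>n. fl' n x) sums (pi * cot (pi * x) - 1 / x)" using eq by (simp add: sums_iff)
  hence "(\<lambda>n. (-x) * fl' n x) sums ((-x) * (pi * cot (pi * x) - 1 / x))" by (rule sums_mult)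
  moreover have "(\<lambda>n. (-x) * fl' n x) = (\<lambda>n. 2 * x^2 / (real (Suc n)^2 - x^2))"
    by (rule ext) (simp add: fl'_def power2_eq_square)
  moreover have "(-x) * (pi * cot (pi * x) - 1 / x) = 1 - pi * x * cot (pi * x)"
    using x by (simp add: field_simps)
  ultimately show ?thesis by simp
qed

lemma FF2_eq:
  assumes "0 < x" "x < 1"
  shows "FF2 x = 1 - pi * x * cot (pi * x)"
proof -
  define L where "L = 1 - pi * x * cot (pi * x)"
  define h where "h = (\<lambda>n. x^2 / (real (Suc n)^2 - x^2))"
  have ax: "\<bar>x\<bar> < 1" using assms by simp
  have s0: "(\<lambda>k. 2 * (a k * x^(2*Suc k))) sums (2 * (\<Sum>n. h n))"
    unfolding h_def by (rule sums_mult[OF swap_series[OF ax]])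
  have s1: "(\<lambda>n. 2 * h n) sums L"
    using cot_pf[OF assms] by (simp add: h_def L_def)
  have s2: "(\<lambda>n. 2 * h n / 2) sums (L / 2)" by (rule sums_divide[OF s1])
  have e: "(\<lambda>n. 2 * h n / 2) = h" by (rule ext) (rule nonzero_mult_div_cancel_left, simp)
  have s3: "h sums (L / 2)" using s2 unfolding e .
  have "(\<Sum>n. h n) = L / 2" using s3 by (rule sums_unique[symmetric])
  hence "2 * (\<Sum>n. h n) = L" by simp
  with s0 have "(\<lambda>k. F2t k x) sums L" by (simp add: F2t_def mult_ac)
  thus ?thesis by (simp add: FF2_def sums_iff L_def)
qed


lemma at_right_limit_const:
  fixes f :: "real \<Rightarrow> real"
  assumes "\<And>x. 0 < x \<Longrightarrow> x < 1 \<Longrightarrow> f x = c" "(f \<longlongrightarrow> l) (at_right 0)"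
  shows "c = l"
proof -
  have "\<forall>\<^sub>F x in at_right 0. f x = c"
    using eventually_at_right_real[OF zero_less_one] by eventually_elim (use assms(1) in auto)
  hence t: "(f \<longlongrightarrow> c) (at_right 0)" by (rule tendsto_eventually)
  show ?thesis using tendsto_unique[OF _ t assms(2)] by simp
qed

lemma tendsto_at_right_0:
  assumes "isCont f (0::real)"
  shows "(f \<longlongrightarrow> f 0) (at_right 0)"
  using assms by (simp add: isCont_def filterlim_at_split)

lemma FF_eq_Gdef:
  assumes "0 < x" "x \<le> 1"
  shows "FF x = Gdef x"
proof -
  have dD1: "((\<lambda>x. FF1 x - G1def x) has_real_derivative 0) (at x within {0<..<1})"
    if "x \<in> {0<..<1}" for x
  proof -
    from that have x: "0 < x" "x < 1" by auto
    have "((\<lambda>x. FF1 x - G1def x) has_real_derivative FF2 x - (1 - pi * x * cot (pi * x))) (at x)"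
      by (intro DERIV_diff FF1_deriv G1def_deriv x) (use x in auto)
    thus ?thesis using FF2_eq[OF x] by (simp add: has_field_derivative_at_within)
  qed
  obtain c where c: "\<And>x. x \<in> {0<..<1} \<Longrightarrow> FF1 x - G1def x = c"
    using has_field_derivative_zero_constant[OF convex_real_interval(8) dD1] by blast
  have "isCont FF1 0" using FF1_deriv[of 0] DERIV_isCont by auto
  hence "(FF1 \<longlongrightarrow> 0) (at_right 0)" using tendsto_at_right_0 FF1_0 by metis
  hence "((\<lambda>x. FF1 x - G1def x) \<longlongrightarrow> 0 - 0) (at_right 0)"
    by (intro tendsto_diff G1def_lim)
  hence c0: "c = 0" using at_right_limit_const[of "\<lambda>x. FF1 x - G1def x" c 0] c by auto
  have dD: "((\<lambda>x. FF x - Gdef x) has_real_derivative 0) (at x within {0<..<1})"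
    if "x \<in> {0<..<1}" for x
  proof -
    from that have x: "0 < x" "x < 1" by auto
    have "((\<lambda>x. FF x - Gdef x) has_real_derivative FF1 x - G1def x) (at x)"
      by (intro DERIV_diff FF_deriv Gdef_deriv x) (use x in auto)
    thus ?thesis using c[OF that] c0 by (simp add: has_field_derivative_at_within)
  qed
  obtain d where d: "\<And>x. x \<in> {0<..<1} \<Longrightarrow> FF x - Gdef x = d"
    using has_field_derivative_zero_constant[OF convex_real_interval(8) dD] by blast
  have "isCont FF 0" using FF_deriv[of 0] DERIV_isCont by auto
  hence "(FF \<longlongrightarrow> 0) (at_right 0)" using tendsto_at_right_0 FF_0 by metis
  moreover have "(Gdef \<longlongrightarrow> 0) (at_right 0)" using tendsto_at_right_0[OF cont_Gdef] Gdef_0 by metis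
  ultimately have "((\<lambda>x. FF x - Gdef x) \<longlongrightarrow> 0 - 0) (at_right 0)"
    by (intro tendsto_diff)
  hence d0: "d = 0" using at_right_limit_const[of "\<lambda>x. FF x - Gdef x" d 0] d by auto
  show ?thesis
  proof (cases "x < 1")
    case True thus ?thesis using d[of x] d0 assms by auto
  next
    case False
    hence x1: "x = 1" using assms by auto
    have "continuous_on {0..1} FF" by (rule continuous_on_subset[OF cont_FF]) auto
    hence "(FF \<longlongrightarrow> FF 1) (at 1 within {0..1})" by (auto simp: continuous_on_def)
    hence l1: "(FF \<longlongrightarrow> FF 1) (at_left 1)" by (simp add: at_within_Icc_at_left)
    have l2: "(Gdef \<longlongrightarrow> Gdef 1) (at_left 1)"
      using cont_Gdef[of 1] by (simp add: isCont_def filterlim_at_split)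
    have "((\<lambda>x. FF x - Gdef x) \<longlongrightarrow> FF 1 - Gdef 1) (at_left 1)"
      by (intro tendsto_diff l1 l2)
    moreover have "\<forall>\<^sub>F x in at_left 1. FF x - Gdef x = 0"
      using eventually_at_left_real[OF zero_less_one] by eventually_elim (use d d0 in auto)
    ultimately have "((\<lambda>_. 0) \<longlongrightarrow> FF 1 - Gdef 1) (at_left (1::real))"
      by (rule Lim_transform_eventually)
    hence "0 = FF 1 - Gdef 1" by (simp add: tendsto_const_iff)
    thus ?thesis using x1 by simp
  qed
qed

lemma summable_Cl2_terms: "summable (\<lambda>k. sin (real (Suc k) * t) / (real (Suc k))^2)"
proof (rule summable_comparison_test[OF _ summable_inv_sq])
  have "norm (sin (real (Suc k) * t) / (real (Suc k))^2) \<le> inverse (real (Suc k)^2)" for k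
    using abs_sin_le_one[of "real (Suc k) * t"] by (simp add: field_simps del: of_nat_Suc)
  thus "\<exists>N. \<forall>n\<ge>N. norm (sin (real (Suc n) * t) / (real (Suc n))^2) \<le> inverse (real (Suc n)^2)" by blast
qed

lemma Cl2_odd: "Cl2 (- t) = - Cl2 t"
proof -
  have "Cl2 (- t) = (\<Sum>k. - (sin (real (Suc k) * t) / (real (Suc k))^2))"
    unfolding Cl2_def by simp
  also have "\<dots> = - Cl2 t" unfolding Cl2_def by (rule suminf_minus[OF summable_Cl2_terms])
  finally show ?thesis .
qed

lemma Cl3_even: "Cl3 (- t) = Cl3 t"
  unfolding Cl3_def by simp

theorem corollary15:
  fixes z :: real
  assumes "0 < \<bar>z\<bar>" and "\<bar>z\<bar> \<le> 1"
  shows "(\<lambda>k. zeta (2 * real (Suc k)) * z ^ (2 * Suc k)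
              / ((real (Suc k) + 1) * (2 * real (Suc k) + 1)))
         sums (1/2 - zeta 3 / (2 * pi^2 * z^2) + Cl3 (2 * pi * z) / (2 * pi^2 * z^2)
               + Cl2 (2 * pi * z) / (2 * pi * z))"
proof -
  define x where "x = \<bar>z\<bar>"
  have x: "0 < x" "x \<le> 1" using assms by (auto simp: x_def)
  have z0: "z \<noteq> 0" using assms by auto
  have "summable (\<lambda>k. Ft k x)"
  proof (rule summable_comparison_test[OF _ summable_mult[OF summable_inv_sq, of BB]])
    show "\<exists>N. \<forall>n\<ge>N. norm (Ft n x) \<le> BB * inverse (real (Suc n)^2)"
      using Ft_bound[of x] x by auto
  qed
  hence "(\<lambda>k. Ft k x) sums FF x" by (simp add: FF_def summable_sums)
  hence s: "(\<lambda>k. Ft k x / z^2) sums (Gdef x / z^2)"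
    using FF_eq_Gdef[OF x] by (intro sums_divide) simp
  have e1: "Ft k x / z^2 = zeta (2 * real (Suc k)) * z ^ (2 * Suc k)
              / ((real (Suc k) + 1) * (2 * real (Suc k) + 1))" for k
  proof -
    have "x^(2*k+4) = z^(2*k+4)" unfolding x_def by (rule power_even_abs) simp
    also have "\<dots> = z^2 * z^(2 * Suc k)"
    proof -
      have "2*k+4 = 2 + 2 * Suc k" by simp
      thus ?thesis by (simp only: power_add)
    qed
    finally have "x^(2*k+4) = z^2 * z^(2 * Suc k)" .
    moreover have "real (Suc k) + 1 = real k + 2" "2 * real (Suc k) + 1 = 2 * real k + 3" by simp_all
    moreover have "(A * (z^2 * Z) / D) / z^2 = A * Z / D" for A Z D :: real
      using z0 by (cases "D = 0") (simp_all add: field_simps)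
    ultimately show ?thesis by (simp add: Ft_def a_def add.commute)
  qed
  have e2: "Gdef x / z^2 = 1/2 - zeta 3 / (2 * pi^2 * z^2) + Cl3 (2 * pi * z) / (2 * pi^2 * z^2)
               + Cl2 (2 * pi * z) / (2 * pi * z)"
  proof -
    have x2: "x^2 = z^2" by (simp add: x_def)
    have c3: "Cl3 (2 * pi * x) = Cl3 (2 * pi * z)"
      by (cases "z \<ge> 0") (auto simp: x_def Cl3_even)
    have c2: "x * Cl2 (2 * pi * x) = z * Cl2 (2 * pi * z)"
      by (cases "z \<ge> 0") (auto simp: x_def Cl2_odd)
    show ?thesis unfolding Gdef_def x2 c3 c2 using z0
      by (simp add: field_simps power2_eq_square)
  qed
  show ?thesis using s unfolding e1 e2 .
qed

end
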